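(* The diameter of $CK(2,4)$ is $7$. The diameter of $CK(2,3)$ is infinite, and for every $\ell\ge 5$ the diameter of $CK(2,\ell)$ is infinite (i.e. these digraphs are not strongly connected).
   Context: $CK(2,\ell)$ has as vertices all sequences $a_1\ldots a_\ell\in\{0,1,2\}^\ell$ with $a_i\neq a_{i+1}$ for $1\le i\le\ell-1$ and $a_1\ne a_\ell$, and an arc from $a_1\ldots a_\ell$ to $b_1\ldots b_\ell$ iff both are vertices and $b_i=a_{i+1}$ for $1\le i\le \ell-1$. The diameter is the maximum over ordered pairs $(u,v)$ of vertices of the length of a shortest directed $u$–$v$ path, and is infinite if some such path does not exist. *)

theory Defs
  imports Main "HOL-Library.Extended_Nat"
begin

definition ck_vert :: "nat \<Rightarrow> nat list \<Rightarrow> bool" where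
  "ck_vert l a \<longleftrightarrow> length a = l \<and> set a \<subseteq> {0,1,2}
     \<and> (\<forall>i. Suc i < l \<longrightarrow> a ! i \<noteq> a ! Suc i)
     \<and> a ! 0 \<noteq> a ! (l - 1)"

definition ck_arc :: "nat \<Rightarrow> nat list \<Rightarrow> nat list \<Rightarrow> bool" where
  "ck_arc l a b \<longleftrightarrow> ck_vert l a \<and> ck_vert l b
     \<and> (\<forall>i. Suc i < l \<longrightarrow> b ! i = a ! Suc i)"

definition ck_dist :: "nat \<Rightarrow> nat list \<Rightarrow> nat list \<Rightarrow> enat" where
  "ck_dist l u v = (if \<exists>n. (ck_arc l ^^ n) u v
                    then enat (LEAST n. (ck_arc l ^^ n) u v) else \<infinity>)"

definition ck_diameter :: "nat \<Rightarrow> enat" where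
  "ck_diameter l = (SUP p \<in> {(u, v). ck_vert l u \<and> ck_vert l v}. ck_dist l (fst p) (snd p))"

end

theory Submission
  imports Defs
begin

definition dd :: "nat \<Rightarrow> nat \<Rightarrow> int" where
  "dd x y = (if y = (x+1) mod 3 then 1 else -1)"

fun ps :: "nat list \<Rightarrow> int" where
  "ps (x#y#r) = dd x y + ps (y#r)"
| "ps _ = 0"

fun adj :: "nat list \<Rightarrow> bool" where
  "adj (x#y#r) = (x \<noteq> y \<and> adj (y#r))"
| "adj _ = True"

definition wind :: "nat list \<Rightarrow> int" where
  "wind a = ps a + dd (last a) (hd a)"

lemma adj_iff: "adj a \<longleftrightarrow> (\<forall>i. Suc i < length a \<longrightarrow> a!i \<noteq> a!Suc i)"
proof (induction a rule: adj.induct)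
  case (1 x y r)
  have "(\<forall>i. Suc i < length (x#y#r) \<longrightarrow> (x#y#r)!i \<noteq> (x#y#r)!Suc i)
     \<longleftrightarrow> x \<noteq> y \<and> (\<forall>i. Suc i < length (y#r) \<longrightarrow> (y#r)!i \<noteq> (y#r)!Suc i)"
    (is "?L \<longleftrightarrow> ?R")
  proof
    assume L: ?L
    show ?R
    proof
      show "x \<noteq> y" using L[rule_format, of 0] by simp
      show "\<forall>i. Suc i < length (y#r) \<longrightarrow> (y#r)!i \<noteq> (y#r)!Suc i"
        using L by (metis Suc_less_eq length_Cons nth_Cons_Suc)
    qed
  next
    assume R: ?R
    show ?L
    proof (intro allI impI)
      fix i assume "Suc i < length (x#y#r)"
      then show "(x#y#r)!i \<noteq> (x#y#r)!Suc i" using R by (cases i) auto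
    qed
  qed
  then show ?case using 1 by simp
qed auto

lemma vert_iff:
  assumes "l \<ge> 1"
  shows "ck_vert l a \<longleftrightarrow> length a = l \<and> set a \<subseteq> {0,1,2} \<and> adj a \<and> hd a \<noteq> last a"
proof -
  have "length a = l \<Longrightarrow> a!0 = hd a \<and> a!(l-1) = last a"
    using assms by (cases a) (auto simp: last_conv_nth)
  then show ?thesis unfolding ck_vert_def adj_iff by auto
qed

lemma shift_iff:
  assumes "length a = l" "length b = l" "l \<ge> 1"
  shows "(\<forall>i. Suc i < l \<longrightarrow> b!i = a!Suc i) \<longleftrightarrow> b = tl a @ [last b]"
proof
  assume H: "\<forall>i. Suc i < l \<longrightarrow> b!i = a!Suc i"
  show "b = tl a @ [last b]"
  proof (rule nth_equalityI)
    show "length b = length (tl a @ [last b])" using assms by simp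
    fix i assume "i < length b"
    show "b!i = (tl a @ [last b])!i"
    proof (cases "Suc i < l")
      case True then show ?thesis using H assms by (auto simp: nth_append nth_tl)
    next
      case False
      then have i: "i = length b - 1" using \<open>i < length b\<close> assms by auto
      have "b \<noteq> []" using assms by auto
      then show ?thesis using i assms by (simp add: nth_append last_conv_nth)
    qed
  qed
next
  assume H: "b = tl a @ [last b]"
  show "\<forall>i. Suc i < l \<longrightarrow> b!i = a!Suc i"
  proof (intro allI impI)
    fix i assume "Suc i < l"
    then show "b!i = a!Suc i" using assms
      by (subst H) (auto simp: nth_append nth_tl)
  qed
qed

lemma arc_iff:
  assumes "l \<ge> 1"
  shows "ck_arc l a b \<longleftrightarrow> ck_vert l a \<and> ck_vert l b \<and> b = tl a @ [last b]"
  unfolding ck_arc_def using shift_iff[of a l b] assms by (auto simp: ck_vert_def)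

lemma ps_Cons: "t \<noteq> [] \<Longrightarrow> ps (x#t) = dd x (hd t) + ps t"
  by (cases t) auto

lemma ps_snoc: "t \<noteq> [] \<Longrightarrow> ps (t @ [x]) = ps t + dd (last t) x"
proof (induction t rule: ps.induct)
  case (1 x y r) then show ?case by simp
next
  case ("2_2" v) then show ?case by simp
qed simp

lemma local_id:
  assumes "a0 \<in> {0,1,2}" "a1 \<in> {0,1,2}" "al \<in> {0,1,2}" "x \<in> {0,1,2::nat}"
    "a0 \<noteq> a1" "a0 \<noteq> al" "x \<noteq> al" "x \<noteq> a1"
  shows "dd a0 a1 + dd al a0 = dd al x + dd x a1"
proof -
  have "a0 = 0 \<or> a0 = 1 \<or> a0 = 2" "a1 = 0 \<or> a1 = 1 \<or> a1 = 2"
    "al = 0 \<or> al = 1 \<or> al = 2" "x = 0 \<or> x = 1 \<or> x = 2" using assms(1-4) by auto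
  then show ?thesis using assms(5-8) by (elim disjE) (simp_all add: dd_def)
qed

lemma arc_wind:
  assumes "ck_arc l a b" "l \<ge> 2"
  shows "wind b = wind a"
proof -
  have va: "length a = l" "set a \<subseteq> {0,1,2}" "adj a" "hd a \<noteq> last a"
   and vb: "length b = l" "set b \<subseteq> {0,1,2}" "adj b" "hd b \<noteq> last b"
   and sh: "b = tl a @ [last b]"
    using assms arc_iff[of l a b] vert_iff[of l] by auto
  obtain a0 t where a: "a = a0 # t" using va(1) assms(2) by (cases a) auto
  have t: "t \<noteq> []" using va(1) assms(2) a by auto
  define x where "x = last b"
  have b: "b = t @ [x]" using sh a x_def by simp
  have adja: "a0 \<noteq> hd t" using va(3) a t by (cases t) auto
  have la: "last a = last t" using a t by simp
  have adjb: "last t \<noteq> x" using vb(3) b t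
    by (metis adj_iff append_butlast_last_id b butlast_snoc length_append_singleton
        last_conv_nth length_greater_0_conv lessI nth_append nth_append_length diff_Suc_1)
  have hb: "hd b = hd t" using b t by simp
  have "hd t \<in> set a" "last t \<in> set a" "a0 \<in> set a" "x \<in> set b"
    using a b t by auto
  then have mem: "a0 \<in> {0,1,2}" "hd t \<in> {0,1,2}" "last t \<in> {0,1,2}" "x \<in> {0,1,2}"
    using va(2) vb(2) by blast+
  have "wind a = dd a0 (hd t) + ps t + dd (last t) a0"
    unfolding wind_def using a t ps_Cons by simp
  moreover have "wind b = ps t + dd (last t) x + dd x (hd t)"
    unfolding wind_def using b t ps_snoc by simp
  moreover have "dd a0 (hd t) + dd (last t) a0 = dd (last t) x + dd x (hd t)"
  proof (rule local_id[OF mem])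
    show "a0 \<noteq> hd t" by (rule adja)
    show "a0 \<noteq> last t" using va(4) la a by simp
    show "x \<noteq> last t" using adjb by simp
    show "x \<noteq> hd t" using vb(4) hb b by simp
  qed
  ultimately show ?thesis by simp
qed

lemma pow_wind: "(ck_arc l ^^ n) u v \<Longrightarrow> l \<ge> 2 \<Longrightarrow> wind v = wind u"
proof (induction n arbitrary: v)
  case 0 then show ?case by simp
next
  case (Suc n)
  then obtain w where "(ck_arc l ^^ n) u w" "ck_arc l w v" by auto
  then show ?case using Suc arc_wind by metis
qed

lemma diam_inf:
  assumes "ck_vert l u" "ck_vert l v" "wind u \<noteq> wind v" "l \<ge> 2"
  shows "ck_diameter l = \<infinity>"
proof -
  have "ck_dist l u v = \<infinity>"
    unfolding ck_dist_def using pow_wind assms by fastforce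
  moreover have "ck_dist l u v \<le> ck_diameter l"
    unfolding ck_diameter_def
    by (rule SUP_upper2[of "(u,v)"]) (use assms in auto)
  ultimately show ?thesis by (simp add: top.extremum_uniqueI)
qed


fun alt :: "nat \<Rightarrow> nat list" where
  "alt 0 = []"
| "alt (Suc k) = 0 # 1 # alt k"

definition ng :: "nat \<Rightarrow> nat" where "ng x = (3 - x) mod 3"

lemma adj_append:
  "adj (xs @ ys) \<longleftrightarrow> adj xs \<and> adj ys \<and> (xs \<noteq> [] \<longrightarrow> ys \<noteq> [] \<longrightarrow> last xs \<noteq> hd ys)"
proof (induction xs rule: adj.induct)
  case (1 x y r) then show ?case by auto
next
  case ("2_2" v) then show ?case by (cases ys) auto
qed simp

lemma ps_append:
  "xs \<noteq> [] \<Longrightarrow> ys \<noteq> [] \<Longrightarrow> ps (xs @ ys) = ps xs + dd (last xs) (hd ys) + ps ys"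
proof (induction xs rule: ps.induct)
  case (1 x y r) then show ?case by simp
next
  case ("2_2" v) then show ?case by (cases ys) auto
qed simp

lemma alt_props:
  "adj (alt k) \<and> set (alt k) \<subseteq> {0,1} \<and> length (alt k) = 2*k
   \<and> (k > 0 \<longrightarrow> hd (alt k) = 0 \<and> last (alt k) = 1 \<and> ps (alt k) = 1)"
proof (induction k)
  case 0 then show ?case by simp
next
  case (Suc k)
  then show ?case
  proof (cases k)
    case 0 then show ?thesis by (simp add: dd_def)
  next
    case (Suc m)
    then have ne: "alt k \<noteq> []" by simp
    have I: "hd (alt k) = 0" "last (alt k) = 1" "ps (alt k) = 1"
      "adj (alt k)" "set (alt k) \<subseteq> {0,1}" "length (alt k) = 2*k"
      using Suc.IH Suc by auto
    have "ps (alt (Suc k)) = 1" using I(1,3) ne by (simp add: ps_Cons dd_def)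
    moreover have "adj (alt (Suc k))" using I(1,4) ne by (cases "alt k") auto
    moreover have "last (alt (Suc k)) = 1" using I(2) ne by simp
    ultimately show ?thesis using I(5,6) by simp
  qed
qed

lemma witness:
  assumes "p \<noteq> []" "hd p = 0" "last p = 2" "adj p" "set p \<subseteq> {0,1,2}"
  shows "ck_vert (length p + 2*k) (p @ alt k) \<and> wind (p @ alt k) = ps p + 1"
proof (cases "k = 0")
  case True
  have "length p \<ge> 1" using assms(1) by (cases p) auto
  then show ?thesis using assms True by (simp add: vert_iff wind_def dd_def)
next
  case False
  have A: "adj (alt k)" "set (alt k) \<subseteq> {0,1}" "length (alt k) = 2*k"
     "hd (alt k) = 0" "last (alt k) = 1" "ps (alt k) = 1" "alt k \<noteq> []"
    using alt_props[of k] False by auto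
  have "ck_vert (length p + 2*k) (p @ alt k)"
    using A assms by (subst vert_iff) (auto simp: adj_append Suc_le_eq)
  moreover have "wind (p @ alt k) = ps p + 1"
    using A assms unfolding wind_def by (simp add: ps_append dd_def)
  ultimately show ?thesis by simp
qed

lemma dd_ng: "x \<in> {0,1,2} \<Longrightarrow> y \<in> {0,1,2} \<Longrightarrow> x \<noteq> y \<Longrightarrow> dd (ng x) (ng y) = - dd x y"
proof -
  assume a: "x \<in> {0,1,2}" "y \<in> {0,1,2}" "x \<noteq> y"
  have "x = 0 \<or> x = 1 \<or> x = 2" "y = 0 \<or> y = 1 \<or> y = 2" using a by auto
  then show ?thesis using a(3) by (elim disjE) (simp_all add: dd_def ng_def)
qed

lemma ng_mem: "x \<in> {0,1,2} \<Longrightarrow> ng x \<in> {0,1,2}"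
proof -
  assume "x \<in> {0,1,2}"
  then have "x = 0 \<or> x = 1 \<or> x = 2" by auto
  then show ?thesis by (elim disjE) (simp_all add: ng_def)
qed

lemma ng_inj: "x \<in> {0,1,2} \<Longrightarrow> y \<in> {0,1,2} \<Longrightarrow> ng x = ng y \<longleftrightarrow> x = y"
proof -
  assume a: "x \<in> {0,1,2}" "y \<in> {0,1,2}"
  have "x = 0 \<or> x = 1 \<or> x = 2" "y = 0 \<or> y = 1 \<or> y = 2" using a by auto
  then show ?thesis by (elim disjE) (simp_all add: ng_def)
qed

lemma ps_ng: "adj a \<Longrightarrow> set a \<subseteq> {0,1,2} \<Longrightarrow> ps (map ng a) = - ps a"
proof (induction a rule: ps.induct)
  case (1 x y r)
  have p: "adj (y#r)" "set (y#r) \<subseteq> {0,1,2}" "x \<in> {0,1,2}" "y \<in> {0,1,2}" "x \<noteq> y"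
    using "1.prems" by auto
  have "ps (map ng (y#r)) = - ps (y#r)" using "1.IH"[OF p(1,2)] .
  then show ?case using dd_ng[OF p(3,4,5)] by simp
qed auto

lemma adj_ng: "adj a \<Longrightarrow> set a \<subseteq> {0,1,2} \<Longrightarrow> adj (map ng a)"
proof (induction a rule: adj.induct)
  case (1 x y r)
  have p: "adj (y#r)" "set (y#r) \<subseteq> {0,1,2}" "x \<in> {0,1,2}" "y \<in> {0,1,2}" "x \<noteq> y"
    using "1.prems" by auto
  have "adj (map ng (y#r))" using "1.IH"[OF p(1,2)] .
  then show ?case using ng_inj[OF p(3,4)] p(5) by simp
qed auto

lemma neg_vert:
  assumes "ck_vert l a" "l \<ge> 1"
  shows "ck_vert l (map ng a) \<and> wind (map ng a) = - wind a"
proof -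
  have v: "length a = l" "set a \<subseteq> {0,1,2}" "adj a" "hd a \<noteq> last a"
    using vert_iff[OF assms(2), of a] assms(1) by blast+
  then have ne: "a \<noteq> []" using assms(2) by (cases a) auto
  have hl: "hd a \<in> {0,1,2}" "last a \<in> {0,1,2}" using subsetD[OF v(2) hd_in_set[OF ne]] subsetD[OF v(2) last_in_set[OF ne]] by simp_all
  have ngi: "ng ` {0,1,2} \<subseteq> {0,1,2}" by (simp add: ng_def)
  have "ng ` set a \<subseteq> {0,1,2}" using image_mono[OF v(2), of ng] ngi by (rule subset_trans)
  then have "set (map ng a) \<subseteq> {0,1,2}" by simp
  moreover have "hd (map ng a) \<noteq> last (map ng a)"
    using ne ng_inj[OF hl] v(4) by (simp add: hd_map last_map)
  ultimately have "ck_vert l (map ng a)"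
    using v adj_ng[OF v(3) v(2)] by (subst vert_iff[OF assms(2)]) simp
  moreover have "wind (map ng a) = - wind a"
    unfolding wind_def using ne v(4) dd_ng[OF hl(2) hl(1)] ps_ng[OF v(3) v(2)]
    by (simp add: hd_map last_map)
  ultimately show ?thesis by simp
qed

lemma inf_from:
  assumes "p \<noteq> []" "hd p = 0" "last p = 2" "adj p" "set p \<subseteq> {0,1,2}" "ps p \<ge> 0"
    "l = length p + 2*k"
  shows "ck_diameter l = \<infinity>"
proof -
  have w: "ck_vert l (p @ alt k)" "wind (p @ alt k) = ps p + 1"
    using witness[OF assms(1-5), of k] assms(7) by auto
  have l: "l \<ge> 2" using assms(1,2,3,7) by (cases p) (auto split: if_splits simp: Suc_le_eq)
  have n: "ck_vert l (map ng (p @ alt k))" "wind (map ng (p @ alt k)) = - wind (p @ alt k)"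
    using neg_vert[OF w(1)] l by auto
  show ?thesis
    by (rule diam_inf[OF w(1) n(1)]) (use w(2) n(2) assms(6) l in auto)
qed

lemma diam3: "ck_diameter 3 = \<infinity>"
  by (rule inf_from[of "[0,1,2]" _ 0]) (auto simp: dd_def)

lemma diam_ge5: "l \<ge> 5 \<Longrightarrow> ck_diameter l = \<infinity>"
proof (cases "even l")
  case True
  assume "l \<ge> 5"
  have "l \<ge> 6" using True \<open>l \<ge> 5\<close> by presburger
  define k where "k = (l - 6) div 2"
  have "l = 6 + 2*k" unfolding k_def using True \<open>l \<ge> 6\<close> by presburger
  then show ?thesis
    by (intro inf_from[of "[0,1,2,0,1,2]" _ k]) (auto simp: dd_def)
next
  case False
  assume "l \<ge> 5"
  define k where "k = (l - 3) div 2"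
  have "l = 3 + 2*k" unfolding k_def using False \<open>l \<ge> 5\<close> by presburger
  then show ?thesis
    by (intro inf_from[of "[0,1,2]" _ k]) (auto simp: dd_def)
qed



definition V4 :: "nat list list" where
  "V4 = [[0,1,0,1], [0,1,0,2], [0,1,2,1], [0,2,0,1], [0,2,0,2], [0,2,1,2], [1,0,1,0], [1,0,1,2], [1,0,2,0], [1,2,0,2], [1,2,1,0], [1,2,1,2], [2,0,1,0], [2,0,2,0], [2,0,2,1], [2,1,0,1], [2,1,2,0], [2,1,2,1]]"

lemma vert4: "ck_vert 4 a \<longleftrightarrow> a \<in> set V4"
proof
  assume "ck_vert 4 a"
  then have v: "length a = 4" "set a \<subseteq> {0,1,2}" "adj a" "hd a \<noteq> last a"
    using vert_iff[of 4 a] by auto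
  then obtain a0 a1 a2 a3 where a: "a = [a0,a1,a2,a3]"
    by (auto simp: length_Suc_conv numeral_eq_Suc)
  have "a0 = 0 \<or> a0 = 1 \<or> a0 = 2" "a1 = 0 \<or> a1 = 1 \<or> a1 = 2"
    "a2 = 0 \<or> a2 = 1 \<or> a2 = 2" "a3 = 0 \<or> a3 = 1 \<or> a3 = 2" using v(2) a by auto
  then show "a \<in> set V4" using v(3,4) a unfolding V4_def
    by (elim disjE) simp_all
next
  assume "a \<in> set V4"
  then show "ck_vert 4 a" unfolding V4_def by (subst vert_iff) auto
qed

definition nxt :: "nat list \<Rightarrow> nat list list" where
  "nxt a = filter (\<lambda>b. b = tl a @ [last b]) V4"

lemma arc4: "ck_arc 4 a b \<longleftrightarrow> a \<in> set V4 \<and> b \<in> set (nxt a)"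
  by (simp add: arc_iff vert4 nxt_def)

fun reachN :: "nat \<Rightarrow> nat list \<Rightarrow> nat list list" where
  "reachN 0 u = [u]"
| "reachN (Suc n) u = remdups (concat (map nxt (reachN n u)))"

lemma reach_sub: "u \<in> set V4 \<Longrightarrow> set (reachN n u) \<subseteq> set V4"
  by (induction n) (auto simp: nxt_def)

lemma reach_iff: "u \<in> set V4 \<Longrightarrow> (ck_arc 4 ^^ n) u v \<longleftrightarrow> v \<in> set (reachN n u)"
proof (induction n arbitrary: v)
  case 0 then show ?case by auto
next
  case (Suc n)
  have "(ck_arc 4 ^^ Suc n) u v \<longleftrightarrow> (\<exists>w. (ck_arc 4 ^^ n) u w \<and> ck_arc 4 w v)" by auto
  also have "\<dots> \<longleftrightarrow> (\<exists>w\<in>set (reachN n u). v \<in> set (nxt w))"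
  proof -
    have IH: "\<And>w. (ck_arc 4 ^^ n) u w \<longleftrightarrow> w \<in> set (reachN n u)" using Suc.IH Suc.prems by blast
    show ?thesis unfolding arc4 IH using reach_sub[OF Suc.prems, of n] by blast
  qed
  finally show ?case by simp
qed

lemma allpairs: "list_all (\<lambda>u. list_all (\<lambda>v. list_ex (\<lambda>n. v \<in> set (reachN n u)) [0..<8]) V4) V4"
  by code_simp

lemma farpair: "[2,1,0,1] \<in> set (reachN 7 [0,1,0,2]) \<and> list_all (\<lambda>m. [2,1,0,1] \<notin> set (reachN m [0,1,0,2])) [0..<7]"
  by code_simp

lemma diam4: "ck_diameter 4 = 7"
proof (rule antisym)
  show "ck_diameter 4 \<le> 7"
    unfolding ck_diameter_def
  proof (rule SUP_least)
    fix p assume "p \<in> {(u, v). ck_vert 4 u \<and> ck_vert 4 v}"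
    then obtain u v where p: "p = (u,v)" "u \<in> set V4" "v \<in> set V4" by (auto simp: vert4)
    then obtain n where n: "n < 8" "v \<in> set (reachN n u)"
      using allpairs unfolding list_all_iff list_ex_iff by fastforce
    then have r: "(ck_arc 4 ^^ n) u v" using reach_iff p by auto
    then have "(LEAST n. (ck_arc 4 ^^ n) u v) \<le> n" by (rule Least_le)
    then have L: "(LEAST n. (ck_arc 4 ^^ n) u v) \<le> 7" using n(1) by simp
    show "ck_dist 4 (fst p) (snd p) \<le> 7" using r L p unfolding ck_dist_def
      by (auto simp: numeral_eq_enat)
  qed
next
  have u: "[0,1,0,2] \<in> set V4" and v: "[2,1,0,1] \<in> set V4" by (simp_all add: V4_def)
  have r7: "(ck_arc 4 ^^ 7) [0,1,0,2] [2,1,0,1]" using farpair reach_iff[OF u] by blast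
  have nr: "\<And>m. m < 7 \<Longrightarrow> \<not> (ck_arc 4 ^^ m) [0,1,0,2] [2,1,0,1]"
    using farpair reach_iff[OF u] by (auto simp: list_all_iff)
  have "(LEAST n. (ck_arc 4 ^^ n) [0,1,0,2] [2,1,0,1]) = 7"
    by (rule Least_equality) (use r7 nr in \<open>auto simp: not_less[symmetric]\<close>)
  then have "ck_dist 4 [0,1,0,2] [2,1,0,1] = 7" unfolding ck_dist_def using r7 by (auto simp: numeral_eq_enat)
  moreover have "ck_dist 4 [0,1,0,2] [2,1,0,1] \<le> ck_diameter 4"
    unfolding ck_diameter_def
    by (rule SUP_upper2[of "([0,1,0,2],[2,1,0,1])"]) (use u v in \<open>auto simp: vert4\<close>)
  ultimately show "7 \<le> ck_diameter 4" by simp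
qed


theorem lemma6:
  shows "ck_diameter 4 = 7 \<and> ck_diameter 3 = \<infinity> \<and> (\<forall>l\<ge>5. ck_diameter l = \<infinity>)"
  using diam4 diam3 diam_ge5 by blast

end
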